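(* Let $A\in\mathbb{R}^{n\times n}$ be symmetric with $r:=\mathrm{rank}(A)\ge 1$. Let $\epsilon\ge 0$, and let $S$ be an ordered subset of $r$ elements of $\{1,\dots,n\}$ such that $A[S]$ is a $(1+\epsilon)$-local maximizer for the absolute determinant on the set of $r\times r$ nonsingular principal submatrices of $A$. Let $H\in\mathbb{R}^{n\times n}$ be the matrix that is zero except that its submatrix with row/column indices $S$ equals $A[S]^{-1}$. Then $H$ is a symmetric reflexive generalized inverse of $A$ having at most $r^2$ nonzero entries, and $\|H\|_1\le r^2(1+\epsilon)\|H^r_{opt}\|_1$, where $H^r_{opt}$ is a symmetric reflexive generalized inverse of $A$ of minimum 1-norm.
   Context: $A[S]$ denotes the principal submatrix of $A$ with row/column indices $S$. $\|H\|_1=\sum_{i,j}|H_{ij}|$. A matrix $H$ is a generalized inverse of $A$ if $AHA=A$, and a reflexive generalized inverse if in addition $HAH=H$. For fixed $\epsilon\ge 0$ and an ordered $r$-subset $S$ of $\{1,\dots,n\}$, $A[S]$ is a $(1+\epsilon)$-local maximizer for the absolute determinant on the set of $r\times r$ nonsingular principal submatrices of $A$ if $|\det(A[S])|>0$ and $|\det(A[S])|$ cannot be increased by a factor of more than $1+\epsilon$ by swapping an element of $S$ with one element from its complement. *)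

theory Defs
  imports "HOL-Analysis.Analysis"
begin

text \<open>Determinant of the principal submatrix M[S] (Leibniz formula over the index set S;
  the absolute value does not depend on how S is ordered).\<close>
definition principal_det :: "real^'n^'n \<Rightarrow> 'n set \<Rightarrow> real" where
  "principal_det M S = (\<Sum>p\<in>{p. p permutes S}. of_int (sign p) * (\<Prod>i\<in>S. M $ i $ p i))"

definition entry_norm1 :: "real^'n^'m \<Rightarrow> real" where
  "entry_norm1 H = (\<Sum>i\<in>UNIV. \<Sum>j\<in>UNIV. \<bar>H $ i $ j\<bar>)"

definition is_ginv :: "real^'n^'n \<Rightarrow> real^'n^'n \<Rightarrow> bool" where
  "is_ginv A H \<longleftrightarrow> A ** H ** A = A"

definition is_reflexive_ginv :: "real^'n^'n \<Rightarrow> real^'n^'n \<Rightarrow> bool" where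
  "is_reflexive_ginv A H \<longleftrightarrow> is_ginv A H \<and> H ** A ** H = H"

definition local_max_det :: "real \<Rightarrow> real^'n^'n \<Rightarrow> 'n set \<Rightarrow> bool" where
  "local_max_det eps A S \<longleftrightarrow> \<bar>principal_det A S\<bar> > 0 \<and>
     (\<forall>i\<in>S. \<forall>j. j \<notin> S \<longrightarrow>
        \<bar>principal_det A (insert j (S - {i}))\<bar> \<le> (1 + eps) * \<bar>principal_det A S\<bar>)"

end

theory Submission
  imports Defs
begin

definition extS :: "'n set \<Rightarrow> real^'n^'n \<Rightarrow> real^'n^'n" where
  "extS S M = (\<chi> a b. if a \<in> S \<and> b \<in> S then M$a$b else (if a = b then 1 else 0))"

lemma principal_det_ext:
  fixes M :: "real^'n^'n"
  shows "principal_det M S = det (extS S M)"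
proof -
  let ?U = "UNIV :: 'n set"
  have sub: "{p. p permutes S} \<subseteq> {p. p permutes ?U}"
    by (auto intro: permutes_subset)
  have "det (extS S M) = (\<Sum>p\<in>{p. p permutes ?U}. of_int (sign p) * (\<Prod>a\<in>?U. extS S M $ a $ p a))"
    by (simp add: det_def)
  also have "\<dots> = (\<Sum>p\<in>{p. p permutes S}. of_int (sign p) * (\<Prod>a\<in>?U. extS S M $ a $ p a))"
  proof (rule sum.mono_neutral_right[OF _ sub])
    show "finite {p. p permutes ?U}" by (simp add: finite_permutations)
    show "\<forall>p\<in>{p. p permutes ?U} - {p. p permutes S}.
        of_int (sign p) * (\<Prod>a\<in>?U. extS S M $ a $ p a) = 0"
    proof
      fix p assume p: "p \<in> {p. p permutes ?U} - {p. p permutes S}"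
      then have pu: "p permutes ?U" and ns: "\<not> p permutes S" by auto
      have "\<exists>a. a \<notin> S \<and> p a \<noteq> a"
      proof (rule ccontr)
        assume "\<not> ?thesis"
        then have "\<forall>x. x \<notin> S \<longrightarrow> p x = x" by auto
        with pu have "p permutes S" by (auto simp: permutes_def)
        with ns show False by simp
      qed
      then obtain a where a: "a \<notin> S" "p a \<noteq> a" by blast
      have "extS S M $ a $ p a = 0" using a by (simp add: extS_def)
      then have "(\<Prod>a\<in>?U. extS S M $ a $ p a) = 0"
        by (intro prod_zero) auto
      then show "of_int (sign p) * (\<Prod>a\<in>?U. extS S M $ a $ p a) = 0" by simp
    qed
  qed
  also have "\<dots> = principal_det M S"
    unfolding principal_det_def
  proof (rule sum.cong[OF refl])
    fix p assume "p \<in> {p. p permutes S}"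
    then have p: "p permutes S" by simp
    have "(\<Prod>a\<in>?U. extS S M $ a $ p a) = (\<Prod>a\<in>S. extS S M $ a $ p a) * (\<Prod>a\<in>?U - S. extS S M $ a $ p a)"
      using prod.subset_diff[of S ?U] by (simp add: mult.commute)
    also have "(\<Prod>a\<in>?U - S. extS S M $ a $ p a) = 1"
      using p by (intro prod.neutral) (auto simp: extS_def permutes_not_in)
    also have "(\<Prod>a\<in>S. extS S M $ a $ p a) = (\<Prod>a\<in>S. M $ a $ p a)"
      using p by (intro prod.cong) (auto simp: extS_def permutes_in_image)
    finally show "of_int (sign p) * (\<Prod>a\<in>?U. extS S M $ a $ p a) = of_int (sign p) * (\<Prod>a\<in>S. M $ a $ p a)"
      by simp
  qed
  finally show ?thesis by simp
qed

lemma det_one_row: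
  fixes c :: "real^'n"
  shows "det (\<chi> a b. if a = i then c $ b else if a = b then 1 else 0 :: real^'n^'n) = c $ i"
proof -
  let ?U = "UNIV :: 'n set"
  let ?M = "(\<chi> a b. if a = i then c $ b else if a = b then 1 else 0 :: real^'n^'n)"
  have "det ?M = (\<Sum>p\<in>{p. p permutes ?U}. of_int (sign p) * (\<Prod>a\<in>?U. ?M $ a $ p a))"
    by (simp add: det_def)
  also have "\<dots> = (\<Sum>p\<in>{p. p permutes ?U}. if p = id then c $ i else 0)"
  proof (rule sum.cong[OF refl])
    fix p assume "p \<in> {p. p permutes ?U}"
    then have pu: "p permutes ?U" by simp
    show "of_int (sign p) * (\<Prod>a\<in>?U. ?M $ a $ p a) = (if p = id then c $ i else 0)"
    proof (cases "p = id")
      case True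
      have "(\<Prod>a\<in>?U. ?M $ a $ a) = ?M $ i $ i * (\<Prod>a\<in>?U - {i}. ?M $ a $ a)"
        by (rule prod.remove) auto
      also have "(\<Prod>a\<in>?U - {i}. ?M $ a $ a) = 1" by (intro prod.neutral) auto
      finally show ?thesis using True by (simp add: sign_id)
    next
      case False
      then obtain a where a: "p a \<noteq> a" by (auto simp: fun_eq_iff)
      have "\<exists>b. b \<noteq> i \<and> p b \<noteq> b"
      proof (cases "a = i")
        case True
        have "p (p i) \<noteq> p i"
        proof
          assume "p (p i) = p i"
          then have "p i = i" using permutes_inj[OF pu] by (auto dest: injD)
          with a True show False by simp
        qed
        then show ?thesis using a True by (intro exI[of _ "p i"]) auto
      next
        case False then show ?thesis using a by blast
      qed
      then obtain b where b: "b \<noteq> i" "p b \<noteq> b" by blast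
      have "?M $ b $ p b = 0" using b by simp
      then have "(\<Prod>a\<in>?U. ?M $ a $ p a) = 0" by (intro prod_zero) (simp, blast)
      then show ?thesis using False by simp
    qed
  qed
  also have "\<dots> = c $ i"
    by (simp add: sum.delta' finite_permutations permutes_id)
  finally show ?thesis .
qed


lemma sign_sq: "of_int (sign p) * of_int (sign p) = (1::real)"
  by (cases rule: sign_cases[of p]) auto

lemma det_extS_perm:
  fixes M :: "real^'n^'n"
  assumes p: "p permutes (UNIV :: 'n set)"
  shows "det (extS S (\<chi> a b. M$(p a)$(p b))) = det (extS (p ` S) M)"
proof -
  let ?X = "extS (p ` S) M"
  have inj: "inj p" using permutes_inj[OF p] .
  have eq: "extS S (\<chi> a b. M$(p a)$(p b)) = (\<chi> a b. (\<chi> a. ?X $ p a) $ a $ p b)"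
    using inj by (simp add: extS_def vec_eq_iff inj_image_mem_iff inj_eq)
  have "det (\<chi> a b. (\<chi> a. ?X $ p a) $ a $ p b) = of_int (sign p) * det (\<chi> a. ?X $ p a)"
    by (rule det_permute_columns[OF p])
  also have "\<dots> = of_int (sign p) * (of_int (sign p) * det ?X)"
    by (simp add: det_permute_rows[OF p])
  also have "\<dots> = det ?X" by (simp add: mult.assoc[symmetric] sign_sq)
  finally show ?thesis using eq by simp
qed

lemma extS_mult:
  fixes X Y :: "real^'n^'n"
  shows "extS S X ** extS S Y = extS S (\<chi> a b. \<Sum>m\<in>S. X$a$m * Y$m$b)"
proof -
  have "(extS S X ** extS S Y) $ a $ b = extS S (\<chi> a b. \<Sum>m\<in>S. X$a$m * Y$m$b) $ a $ b" for a b
  proof (cases "a \<in> S")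
    case True
    show ?thesis
    proof (cases "b \<in> S")
      case True
      have "(extS S X ** extS S Y) $ a $ b = (\<Sum>m\<in>UNIV. (if m \<in> S then X$a$m * Y$m$b else 0))"
        using \<open>a \<in> S\<close> True unfolding matrix_matrix_mult_def extS_def vec_lambda_beta
        by (intro sum.cong) auto
      also have "\<dots> = (\<Sum>m\<in>S. X$a$m * Y$m$b)"
        by (simp add: sum.If_cases)
      finally show ?thesis using \<open>a \<in> S\<close> True by (simp add: extS_def)
    next
      case False
      have "(extS S X ** extS S Y) $ a $ b = (\<Sum>m\<in>UNIV. (if m = b then 0 else 0))"
        using \<open>a \<in> S\<close> False unfolding matrix_matrix_mult_def extS_def vec_lambda_beta
        by (intro sum.cong) auto
      then show ?thesis using False \<open>a \<in> S\<close> by (auto simp: extS_def)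
    qed
  next
    case False
    have "(extS S X ** extS S Y) $ a $ b = (\<Sum>m\<in>UNIV. (if m = a then extS S Y $ a $ b else 0))"
      using False unfolding matrix_matrix_mult_def vec_lambda_beta
      by (intro sum.cong) (auto simp: extS_def)
    then show ?thesis using False by (simp add: extS_def)
  qed
  then show ?thesis by (simp add: vec_eq_iff)
qed

lemma extS_transpose:
  fixes X :: "real^'n^'n"
  shows "transpose (extS S X) = extS S (transpose X)"
  by (auto simp: extS_def transpose_def vec_eq_iff)


lemma basic_facts:
  fixes A H :: "real^'n^'n" and S :: "'n set"
  assumes H_inv: "\<forall>i\<in>S. \<forall>j\<in>S. (\<Sum>k\<in>S. A $ i $ k * H $ k $ j) = (if i = j then 1 else 0)"
    and H_zero: "\<forall>i j. i \<notin> S \<or> j \<notin> S \<longrightarrow> H $ i $ j = 0"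
  shows "\<And>i j. i \<in> S \<Longrightarrow> (A ** H) $ i $ j = (if i = j then 1 else 0)"
    and "\<And>k j. j \<notin> S \<Longrightarrow> (A ** H) $ k $ j = 0"
proof -
  fix i j assume i: "i \<in> S"
  show "(A ** H) $ i $ j = (if i = j then 1 else 0)"
  proof (cases "j \<in> S")
    case True
    have "(A ** H) $ i $ j = (\<Sum>k\<in>UNIV. if k \<in> S then A $ i $ k * H $ k $ j else 0)"
      unfolding matrix_matrix_mult_def vec_lambda_beta using H_zero by (intro sum.cong) auto
    also have "\<dots> = (\<Sum>k\<in>S. A $ i $ k * H $ k $ j)" by (simp add: sum.If_cases)
    finally show ?thesis using H_inv i True by simp
  next
    case False
    then show ?thesis using H_zero i unfolding matrix_matrix_mult_def vec_lambda_beta by auto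
  qed
next
  fix k j assume "j \<notin> S"
  then show "(A ** H) $ k $ j = 0" using H_zero unfolding matrix_matrix_mult_def vec_lambda_beta by auto
qed

lemma sum_delta_conj:
  "(\<Sum>k\<in>(UNIV::'n::finite set). if k = a \<and> P k then f k else (0::real)) = (if P a then f a else 0)"
proof -
  have "(\<Sum>k\<in>(UNIV::'n set). if k = a \<and> P k then f k else (0::real)) = (\<Sum>k\<in>UNIV. if k = a then (if P k then f k else 0) else 0)"
    by (intro sum.cong) auto
  then show ?thesis by (simp add: sum.delta')
qed

lemma proj_mult:
  fixes X :: "real^'n^'n"
  shows "(\<chi> i j. if i = j \<and> i \<in> S then (1::real) else 0) ** X = (\<chi> i j. if i \<in> S then X$i$j else 0)"
    and "X ** (\<chi> i j. if i = j \<and> i \<in> S then (1::real) else 0) = (\<chi> i j. if j \<in> S then X$i$j else 0)"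
  by (auto simp: matrix_matrix_mult_def vec_eq_iff if_distrib[of "\<lambda>x. x * _"] if_distrib[of "\<lambda>x. _ * x"] sum.delta sum_delta_conj cong: if_cong)


lemma sym_refl_part:
  fixes A H :: "real^'n^'n" and S :: "'n set"
  assumes symA: "transpose A = A"
    and H_inv: "\<forall>i\<in>S. \<forall>j\<in>S. (\<Sum>k\<in>S. A $ i $ k * H $ k $ j) = (if i = j then 1 else 0)"
    and H_zero: "\<forall>i j. i \<notin> S \<or> j \<notin> S \<longrightarrow> H $ i $ j = 0"
  shows "transpose H = H" and "H ** A ** H = H"
proof -
  define P where "P = (\<chi> i j. if i = j \<and> i \<in> S then (1::real) else 0)"
  note F = basic_facts[OF H_inv H_zero]
  have PAH0: "P ** (A ** H) = P"
    unfolding P_def proj_mult using F(1)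
    by (auto simp: vec_eq_iff)
  then have PAH: "P ** A ** H = P" by (simp add: matrix_mul_assoc)
  have PH: "P ** H = H" unfolding P_def proj_mult using H_zero by (auto simp: vec_eq_iff)
  have HP: "H ** P = H" unfolding P_def proj_mult using H_zero by (auto simp: vec_eq_iff)
  have PT: "transpose P = P" unfolding P_def by (auto simp: transpose_def vec_eq_iff)
  have HTAP: "transpose H ** A ** P = P"
    using arg_cong[OF PAH, of transpose] by (simp add: matrix_transpose_mul symA PT matrix_mul_assoc)
  have HTP: "transpose H ** P = transpose H"
    using arg_cong[OF PH, of transpose] by (simp add: matrix_transpose_mul PT)
  have e1: "H = transpose H ** A ** H"
    by (metis HTAP PH matrix_mul_assoc)
  have e2: "transpose H = transpose H ** A ** H"
    by (metis HTP PAH matrix_mul_assoc)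
  show "transpose H = H" using e1 e2 by simp
  show "H ** A ** H = H" by (metis HP PAH matrix_mul_assoc)
qed


lemma ginv_part:
  fixes A H :: "real^'n^'n" and S :: "'n set"
  assumes H_inv: "\<forall>i\<in>S. \<forall>j\<in>S. (\<Sum>k\<in>S. A $ i $ k * H $ k $ j) = (if i = j then 1 else 0)"
    and H_zero: "\<forall>i j. i \<notin> S \<or> j \<notin> S \<longrightarrow> H $ i $ j = 0"
    and cardS: "card S = rank A"
  shows "A ** H ** A = A"
proof -
  note F = basic_facts[OF H_inv H_zero]
  define B where "B = (\<lambda>i. A $ i) ` S"
  have AH: "(A ** H) $ i $ j = (\<Sum>k\<in>UNIV. A $ i $ k * H $ k $ j)" for i j
    by (simp add: matrix_matrix_mult_def)
  have inj: "inj_on (\<lambda>i. A $ i) S"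
  proof (rule inj_onI)
    fix i j assume ij: "i \<in> S" "j \<in> S" "A $ i = A $ j"
    have "(A ** H) $ i $ j = (A ** H) $ j $ j" using ij(3) by (simp add: AH)
    then show "i = j" using F(1)[OF ij(1)] F(1)[OF ij(2)] by (auto split: if_splits)
  qed
  have cardB: "card B = card S" unfolding B_def using card_image[OF inj] .
  have indep: "independent B"
  proof (rule independent_if_scalars_zero)
    show "finite B" unfolding B_def by simp
    fix f x assume sum0: "(\<Sum>x\<in>B. f x *\<^sub>R x) = 0" and x: "x \<in> B"
    then obtain j where j: "j \<in> S" "x = A $ j" unfolding B_def by auto
    have s0: "(\<Sum>i\<in>S. f (A $ i) *\<^sub>R A $ i) = 0"
      using sum0 unfolding B_def by (simp add: sum.reindex[OF inj])
    have comp: "(\<Sum>i\<in>S. f (A $ i) * A $ i $ m) = 0" for m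
    proof -
      have "(\<Sum>i\<in>S. f (A $ i) *\<^sub>R A $ i) $ m = 0" using s0 by simp
      then show ?thesis by (simp add: sum_component)
    qed
    have "0 = (\<Sum>m\<in>UNIV. (\<Sum>i\<in>S. f (A $ i) * A $ i $ m) * H $ m $ j)"
      using comp by simp
    also have "\<dots> = (\<Sum>i\<in>S. f (A $ i) * (A ** H) $ i $ j)"
      by (simp add: AH sum_distrib_left sum_distrib_right mult.assoc sum.swap[of _ S])
    also have "\<dots> = (\<Sum>i\<in>S. if i = j then f (A $ i) else 0)"
      using F(1) by (intro sum.cong) auto
    also have "\<dots> = f x" using j by (simp add: sum.delta')
    finally show "f x = 0" by simp
  qed
  have rowsA: "rows A = range (\<lambda>i. A $ i)"
    by (auto simp: rows_def row_def vec_lambda_eta)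
  have BR: "B \<subseteq> rows A" unfolding rowsA B_def by auto
  have "card B = dim (rows A)" using cardB cardS by (simp add: row_rank_def)
  then have span: "rows A \<subseteq> span B"
    using card_eq_dim[OF BR _ _] indep unfolding B_def by auto
  define V where "V = {x :: real^'n. \<forall>j. (\<Sum>m\<in>UNIV. x $ m * (H ** A) $ m $ j) = x $ j}"
  have subV: "subspace V"
    unfolding subspace_def V_def
    by (auto simp: sum.distrib distrib_right mult.assoc simp flip: sum_distrib_left)
  have BV: "B \<subseteq> V"
  proof
    fix x assume "x \<in> B"
    then obtain i where i: "i \<in> S" "x = A $ i" unfolding B_def by auto
    have "(\<Sum>m\<in>UNIV. A $ i $ m * (H ** A) $ m $ j) = A $ i $ j" for j
    proof -
      have "(\<Sum>m\<in>UNIV. A $ i $ m * (H ** A) $ m $ j) = (A ** (H ** A)) $ i $ j"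
        by (simp add: matrix_matrix_mult_def)
      also have "\<dots> = ((A ** H) ** A) $ i $ j" by (simp add: matrix_mul_assoc)
      also have "\<dots> = (\<Sum>m\<in>UNIV. (A ** H) $ i $ m * A $ m $ j)"
        by (simp add: matrix_matrix_mult_def)
      also have "\<dots> = (\<Sum>m\<in>UNIV. if m = i then A $ i $ j else 0)"
        using F(1)[OF i(1)] by (intro sum.cong) auto
      finally show ?thesis by simp
    qed
    then show "x \<in> V" using i unfolding V_def by simp
  qed
  have "A $ k \<in> V" for k
  proof -
    have "A $ k \<in> span B" using span rowsA by auto
    then show ?thesis using span_minimal[OF BV subV] by auto
  qed
  then have "(A ** (H ** A)) $ k $ j = A $ k $ j" for k j
    unfolding V_def by (simp add: matrix_matrix_mult_def)
  then show ?thesis by (simp add: vec_eq_iff matrix_mul_assoc[symmetric])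
qed


lemma swap_permutes:
  fixes i k :: 'n
  shows "(\<lambda>x. if x = i then k else if x = k then i else x) permutes UNIV"
proof -
  define s where "s = (\<lambda>x. if x = i then k else if x = k then i else x)"
  have ss: "s (s y) = y" for y unfolding s_def by auto
  have "s permutes UNIV" unfolding permutes_univ
  proof
    fix y show "\<exists>!x. s x = y"
    proof (rule ex1I[of _ "s y"])
      show "s (s y) = y" by (rule ss)
      fix x assume "s x = y"
      then have "s (s x) = s y" by simp
      then show "x = s y" using ss[of x] by simp
    qed
  qed
  then show ?thesis unfolding s_def .
qed

lemma W_bound:
  fixes A H :: "real^'n^'n" and S :: "'n set" and eps :: real
  assumes symA: "transpose A = A"
    and cardS: "card S = rank A"
    and locmax: "local_max_det eps A S"
    and H_inv: "\<forall>i\<in>S. \<forall>j\<in>S. (\<Sum>k\<in>S. A $ i $ k * H $ k $ j) = (if i = j then 1 else 0)"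
    and H_zero: "\<forall>i j. i \<notin> S \<or> j \<notin> S \<longrightarrow> H $ i $ j = 0"
    and i: "i \<in> S" and k: "k \<notin> S"
  shows "((A ** H) $ k $ i)^2 \<le> 1 + eps"
proof -
  note F = basic_facts[OF H_inv H_zero]
  define W where "W = A ** H"
  have HT: "transpose H = H" and HAH: "H ** A ** H = H"
    using sym_refl_part[OF symA H_inv H_zero] by auto
  have AHA: "A ** H ** A = A" using ginv_part[OF H_inv H_zero cardS] .
  have WT: "transpose W = H ** A"
    unfolding W_def by (simp add: matrix_transpose_mul HT symA)
  have AW: "A = W ** A ** transpose W"
  proof -
    have "A = A ** H ** (A ** H ** A)" using AHA by simp
    also have "\<dots> = W ** A ** (H ** A)" unfolding W_def by (simp add: matrix_mul_assoc)
    finally show ?thesis using WT by simp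
  qed
  have Wz: "W $ x $ m = 0" if "m \<notin> S" for x m using F(2)[OF that] unfolding W_def .
  have Aent: "A $ x $ y = (\<Sum>m'\<in>S. (\<Sum>m\<in>S. W $ x $ m * A $ m $ m') * W $ y $ m')" for x y
  proof -
    have "A $ x $ y = (\<Sum>m'\<in>UNIV. (\<Sum>m\<in>UNIV. W $ x $ m * A $ m $ m') * W $ y $ m')"
      by (subst AW) (simp add: matrix_matrix_mult_def transpose_def)
    also have "\<dots> = (\<Sum>m'\<in>UNIV. if m' \<in> S then (\<Sum>m\<in>UNIV. if m \<in> S then W $ x $ m * A $ m $ m' else 0) * W $ y $ m' else 0)"
    proof (intro sum.cong refl)
      fix m' :: 'n
      have "(\<Sum>m\<in>UNIV. W $ x $ m * A $ m $ m') = (\<Sum>m\<in>UNIV. if m \<in> S then W $ x $ m * A $ m $ m' else 0)"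
        using Wz by (intro sum.cong refl) auto
      then show "(\<Sum>m\<in>UNIV. W $ x $ m * A $ m $ m') * W $ y $ m' = (if m' \<in> S then (\<Sum>m\<in>UNIV. if m \<in> S then W $ x $ m * A $ m $ m' else 0) * W $ y $ m' else 0)"
        using Wz[of m' y] by auto
    qed
    also have "\<dots> = (\<Sum>m'\<in>S. (\<Sum>m\<in>S. W $ x $ m * A $ m $ m') * W $ y $ m')"
      by (simp add: sum.If_cases)
    finally show ?thesis .
  qed
  define s where "s = (\<lambda>x. if x = i then k else if x = k then i else x)"
  have sp: "s permutes UNIV" unfolding s_def by (rule swap_permutes)
  define Ws where "Ws = (\<chi> a b. W $ (s a) $ b)"
  have eqs: "(\<chi> a b. A $ (s a) $ (s b)) =
     (\<chi> a b. \<Sum>m'\<in>S. (\<chi> a b. \<Sum>m\<in>S. Ws $ a $ m * A $ m $ b) $ a $ m' * transpose Ws $ m' $ b)"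
    unfolding vec_eq_iff Ws_def transpose_def vec_lambda_beta by (intro allI) (rule Aent)
  have ext_eq: "extS S (\<chi> a b. A $ (s a) $ (s b)) = extS S Ws ** extS S A ** transpose (extS S Ws)"
    by (simp add: extS_mult extS_transpose eqs)
  have dWs: "det (extS S Ws) = W $ k $ i"
  proof -
    define c where "c = (\<chi> b. if b \<in> S then W $ k $ b else (0::real))"
    have "extS S Ws = (\<chi> a b. if a = i then c $ b else if a = b then 1 else 0)"
      unfolding vec_eq_iff
    proof (intro allI)
      fix a b
      show "extS S Ws $ a $ b = (\<chi> a b. if a = i then c $ b else if a = b then 1 else 0) $ a $ b"
        using i k F(1)[of a b] unfolding W_def[symmetric]
        by (auto simp: extS_def Ws_def s_def c_def)
    qed
    then show ?thesis using det_one_row[of i c] i by (simp add: c_def)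
  qed
  have sS: "s ` S = insert k (S - {i})"
    using i k unfolding s_def by (auto simp: image_iff) 
  have "principal_det A (insert k (S - {i})) = det (extS (s ` S) A)"
    by (simp add: principal_det_ext sS)
  also have "\<dots> = det (extS S (\<chi> a b. A $ (s a) $ (s b)))"
    using det_extS_perm[OF sp] by simp
  also have "\<dots> = (W $ k $ i)^2 * principal_det A S"
    by (simp add: ext_eq det_mul dWs principal_det_ext power2_eq_square)
  finally have pdT: "principal_det A (insert k (S - {i})) = (W $ k $ i)^2 * principal_det A S" .
  have pos: "\<bar>principal_det A S\<bar> > 0"
    and le: "\<bar>principal_det A (insert k (S - {i}))\<bar> \<le> (1 + eps) * \<bar>principal_det A S\<bar>"
    using locmax i k unfolding local_max_det_def by auto
  have "(W $ k $ i)^2 * \<bar>principal_det A S\<bar> \<le> (1 + eps) * \<bar>principal_det A S\<bar>"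
    using le unfolding pdT by (simp add: abs_mult)
  then show ?thesis using pos unfolding W_def by simp
qed


lemma abs_prod_bound:
  fixes a b c :: real
  assumes "a^2 \<le> c" "b^2 \<le> c"
  shows "\<bar>a\<bar> * \<bar>b\<bar> \<le> c"
proof -
  have "0 \<le> (\<bar>a\<bar> - \<bar>b\<bar>)^2" by simp
  also have "\<dots> = a^2 + b^2 - 2 * (\<bar>a\<bar> * \<bar>b\<bar>)"
    by (simp add: power2_eq_square algebra_simps)
  finally show ?thesis using assms by linarith
qed

lemma norm_part:
  fixes A H G :: "real^'n^'n" and S :: "'n set" and eps :: real
  assumes symA: "transpose A = A"
    and eps: "eps \<ge> 0"
    and cardS: "card S = rank A"
    and locmax: "local_max_det eps A S"
    and H_inv: "\<forall>i\<in>S. \<forall>j\<in>S. (\<Sum>k\<in>S. A $ i $ k * H $ k $ j) = (if i = j then 1 else 0)"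
    and H_zero: "\<forall>i j. i \<notin> S \<or> j \<notin> S \<longrightarrow> H $ i $ j = 0"
    and G: "A ** G ** A = A"
  shows "entry_norm1 H \<le> real ((rank A)^2) * (1 + eps) * entry_norm1 G"
proof -
  note F = basic_facts[OF H_inv H_zero]
  define W where "W = A ** H"
  have HT: "transpose H = H" and HAH: "H ** A ** H = H"
    using sym_refl_part[OF symA H_inv H_zero] by auto
  have WT: "transpose W = H ** A"
    unfolding W_def by (simp add: matrix_transpose_mul HT symA)
  have Wb: "(W $ k $ i)^2 \<le> 1 + eps" for k i
  proof (cases "i \<in> S")
    case False then show ?thesis using F(2)[OF False] eps unfolding W_def by simp
  next
    case True
    show ?thesis
    proof (cases "k \<in> S")
      case True2: True
      then show ?thesis using F(1)[OF True2, of i] eps unfolding W_def by simp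
    next
      case False
      show ?thesis using W_bound[OF symA cardS locmax H_inv H_zero True False] unfolding W_def by simp
    qed
  qed
  have HG: "H = transpose W ** G ** W"
  proof -
    have "H = H ** (A ** G ** A) ** H" using HAH G by simp
    also have "\<dots> = (H ** A) ** G ** (A ** H)" by (simp add: matrix_mul_assoc)
    finally show ?thesis using WT unfolding W_def by simp
  qed
  have Hent: "\<bar>H $ i $ j\<bar> \<le> (1 + eps) * entry_norm1 G" for i j
  proof -
    have "H $ i $ j = (\<Sum>l\<in>UNIV. (\<Sum>k\<in>UNIV. W $ k $ i * G $ k $ l) * W $ l $ j)"
      by (subst HG) (simp add: matrix_matrix_mult_def transpose_def)
    also have "\<dots> = (\<Sum>l\<in>UNIV. \<Sum>k\<in>UNIV. W $ k $ i * G $ k $ l * W $ l $ j)"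
      by (simp add: sum_distrib_right)
    finally have "\<bar>H $ i $ j\<bar> = \<bar>\<Sum>l\<in>UNIV. \<Sum>k\<in>UNIV. W $ k $ i * G $ k $ l * W $ l $ j\<bar>" by simp
    also have "\<dots> \<le> (\<Sum>l\<in>UNIV. \<bar>\<Sum>k\<in>UNIV. W $ k $ i * G $ k $ l * W $ l $ j\<bar>)"
      by (rule sum_abs)
    also have "\<dots> \<le> (\<Sum>l\<in>UNIV. \<Sum>k\<in>UNIV. \<bar>W $ k $ i * G $ k $ l * W $ l $ j\<bar>)"
      by (intro sum_mono sum_abs)
    also have "\<dots> \<le> (\<Sum>l\<in>UNIV. \<Sum>k\<in>UNIV. (1 + eps) * \<bar>G $ k $ l\<bar>)"
    proof (intro sum_mono)
      fix l k
      have "\<bar>W $ k $ i\<bar> * \<bar>W $ l $ j\<bar> \<le> 1 + eps" by (rule abs_prod_bound[OF Wb Wb])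
      then have "(\<bar>W $ k $ i\<bar> * \<bar>W $ l $ j\<bar>) * \<bar>G $ k $ l\<bar> \<le> (1 + eps) * \<bar>G $ k $ l\<bar>"
        by (intro mult_right_mono) auto
      then show "\<bar>W $ k $ i * G $ k $ l * W $ l $ j\<bar> \<le> (1 + eps) * \<bar>G $ k $ l\<bar>"
        by (simp add: abs_mult algebra_simps)
    qed
    also have "\<dots> = (1 + eps) * (\<Sum>l\<in>UNIV. \<Sum>k\<in>UNIV. \<bar>G $ k $ l\<bar>)"
      by (simp add: sum_distrib_left)
    also have "(\<Sum>l\<in>UNIV. \<Sum>k\<in>UNIV. \<bar>G $ k $ l\<bar>) = entry_norm1 G"
      unfolding entry_norm1_def by (rule sum.swap)
    finally show ?thesis .
  qed
  have "entry_norm1 H = (\<Sum>i\<in>S. \<Sum>j\<in>S. \<bar>H $ i $ j\<bar>)"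
  proof -
    have "entry_norm1 H = (\<Sum>i\<in>UNIV. if i \<in> S then (\<Sum>j\<in>UNIV. if j \<in> S then \<bar>H $ i $ j\<bar> else 0) else 0)"
      unfolding entry_norm1_def using H_zero by (intro sum.cong refl) (auto intro!: sum.cong)
    then show ?thesis by (simp add: sum.If_cases)
  qed
  also have "\<dots> \<le> (\<Sum>i\<in>S. \<Sum>j\<in>S. (1 + eps) * entry_norm1 G)"
    by (intro sum_mono Hent)
  also have "\<dots> = real (card S * card S) * ((1 + eps) * entry_norm1 G)" by simp
  finally show ?thesis using cardS by (simp add: power2_eq_square mult.assoc)
qed


theorem theorem2p6:
  fixes A H :: "real^'n^'n" and S :: "'n set" and eps :: real
  assumes symA: "transpose A = A"
    and rank_pos: "rank A \<ge> 1"
    and eps: "eps \<ge> 0"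
    and cardS: "card S = rank A"
    and locmax: "local_max_det eps A S"
    and H_inv: "\<forall>i\<in>S. \<forall>j\<in>S. (\<Sum>k\<in>S. A $ i $ k * H $ k $ j) = (if i = j then 1 else 0)"
    and H_zero: "\<forall>i j. i \<notin> S \<or> j \<notin> S \<longrightarrow> H $ i $ j = 0"
  shows "transpose H = H \<and> is_reflexive_ginv A H
    \<and> card {(i, j). H $ i $ j \<noteq> 0} \<le> (rank A)^2
    \<and> (\<forall>G. transpose G = G \<and> is_reflexive_ginv A G \<longrightarrow>
          entry_norm1 H \<le> real ((rank A)^2) * (1 + eps) * entry_norm1 G)"
proof (intro conjI allI impI)
  show "transpose H = H" using sym_refl_part[OF symA H_inv H_zero] by simp
  show "is_reflexive_ginv A H"
    unfolding is_reflexive_ginv_def is_ginv_def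
    using sym_refl_part[OF symA H_inv H_zero] ginv_part[OF H_inv H_zero cardS] by simp
  have sub: "{(i, j). H $ i $ j \<noteq> 0} \<subseteq> S \<times> S" using H_zero by auto
  have "card {(i, j). H $ i $ j \<noteq> 0} \<le> card (S \<times> S)"
    by (rule card_mono[OF _ sub]) simp
  also have "\<dots> = (rank A)^2" using cardS by (simp add: card_cartesian_product power2_eq_square)
  finally show "card {(i, j). H $ i $ j \<noteq> 0} \<le> (rank A)^2" .
  fix G :: "real^'n^'n"
  assume "transpose G = G \<and> is_reflexive_ginv A G"
  then have "A ** G ** A = A" unfolding is_reflexive_ginv_def is_ginv_def by simp
  then show "entry_norm1 H \<le> real ((rank A)^2) * (1 + eps) * entry_norm1 G"
    by (rule norm_part[OF symA eps cardS locmax H_inv H_zero])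
qed

end
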